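(* Let $q(x)=x^g+a_{g-1}x^{g-1}+\cdots+a_1x+a_0\in\mathbb{Z}[x]$ be irreducible over $\mathbb{Z}$, and suppose $|a_{g-1}|>2g$. Then $\mathrm{sym}(q)(x)=x^g\,q\!\left(x+\frac1x\right)$ satisfies the homological criterion, i.e. it is symplectically irreducible, is not a cyclotomic polynomial, and is not a polynomial in $x^k$ for any $k>1$.
   Context: A symplectic polynomial is an even-degree integer polynomial that is monic and palindromic (equivalently, the characteristic polynomial of an element of $\mathrm{Sp}(2n,\mathbb{Z})$). A symplectic polynomial is symplectically irreducible if it is not a product of two nontrivial symplectic polynomials. A cyclotomic polynomial is the minimal polynomial over $\mathbb{Q}$ of a primitive $n$-th root of unity. *)

theory Defs
  imports "HOL-Computational_Algebra.Computational_Algebra" Complex_Main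
begin

definition symplectic_poly :: "int poly \<Rightarrow> bool" where
  "symplectic_poly p \<longleftrightarrow> even (degree p) \<and> lead_coeff p = 1 \<and>
     (\<forall>i\<le>degree p. coeff p i = coeff p (degree p - i))"

definition symplectically_irreducible :: "int poly \<Rightarrow> bool" where
  "symplectically_irreducible p \<longleftrightarrow> symplectic_poly p \<and> degree p > 0 \<and>
     \<not> (\<exists>a b. symplectic_poly a \<and> symplectic_poly b \<and> degree a > 0 \<and> degree b > 0 \<and> p = a * b)"

definition primitive_root_of_unity :: "nat \<Rightarrow> complex \<Rightarrow> bool" where
  "primitive_root_of_unity n z \<longleftrightarrow> n > 0 \<and> z ^ n = 1 \<and> (\<forall>k. 0 < k \<and> k < n \<longrightarrow> z ^ k \<noteq> 1)"

definition is_min_poly_rat :: "rat poly \<Rightarrow> complex \<Rightarrow> bool" where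
  "is_min_poly_rat m z \<longleftrightarrow> lead_coeff m = 1 \<and> poly (map_poly of_rat m) z = 0 \<and>
     (\<forall>r :: rat poly. r \<noteq> 0 \<and> poly (map_poly of_rat r) z = 0 \<longrightarrow> degree m \<le> degree r)"

definition cyclotomic :: "int poly \<Rightarrow> bool" where
  "cyclotomic p \<longleftrightarrow> (\<exists>n z. primitive_root_of_unity n z \<and> is_min_poly_rat (map_poly of_int p) z)"

definition poly_in_power :: "int poly \<Rightarrow> nat \<Rightarrow> bool" where
  "poly_in_power p k \<longleftrightarrow> (\<exists>r. p = pcompose r (monom 1 k))"

text \<open>sym(q)(x) = x^g q(x + 1/x), g = deg q, written out as
  sum_i a_i (x^2+1)^i x^(g-i).\<close>
definition sym_poly :: "int poly \<Rightarrow> int poly" where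
  "sym_poly q = (\<Sum>i\<le>degree q. smult (coeff q i) ([:1, 0, 1:] ^ i * monom 1 (degree q - i)))"

end

theory Submission
  imports Defs
begin

lemma mp_add:
  assumes "\<And>a b. f (a+b) = f a + f b" "f 0 = 0"
  shows "map_poly f (p+q) = map_poly f p + map_poly f q"
  by (rule poly_eqI) (simp add: coeff_map_poly assms)

lemma mp_diff:
  assumes "\<And>a b. f (a-b) = f a - f b" "f 0 = 0"
  shows "map_poly f (p-q) = map_poly f p - map_poly f q"
  by (rule poly_eqI) (simp add: coeff_map_poly assms)

lemma mp_mult:
  fixes f :: "'a::comm_ring_1 \<Rightarrow> 'b::comm_ring_1"
  assumes "\<And>a b. f (a+b) = f a + f b" "\<And>a b. f (a*b) = f a * f b" "f 0 = 0"
  shows "map_poly f (p*q) = map_poly f p * map_poly f q"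
proof (induction p)
  case 0
  then show ?case by (simp add: assms)
next
  case (pCons a p)
  then show ?case
    by (simp add: mp_add map_poly_smult map_poly_pCons assms)
qed

lemma mp_power:
  fixes f :: "'a::comm_ring_1 \<Rightarrow> 'b::comm_ring_1"
  assumes "\<And>a b. f (a+b) = f a + f b" "\<And>a b. f (a*b) = f a * f b" "f 0 = 0" "f 1 = 1"
  shows "map_poly f (p^n) = map_poly f p ^ n"
  by (induction n) (simp_all add: mp_mult assms)

lemma mp_sum:
  fixes f :: "'a::comm_ring_1 \<Rightarrow> 'b::comm_ring_1"
  assumes "\<And>a b. f (a+b) = f a + f b" "f 0 = 0"
  shows "map_poly f (\<Sum>i\<in>A. g i) = (\<Sum>i\<in>A. map_poly f (g i))"
  by (induction A rule: infinite_finite_induct) (simp_all add: mp_add assms)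

definition symd :: "nat \<Rightarrow> int poly \<Rightarrow> int poly" where
  "symd d r = (\<Sum>i\<le>d. smult (coeff r i) ([:1, 0, 1:] ^ i * monom 1 (d - i)))"

lemma sym_poly_symd: "sym_poly q = symd (degree q) q"
  by (simp add: sym_poly_def symd_def)

lemma poly_ext_sum:
  fixes x :: "'a::{comm_semiring_0,semiring_1}"
  assumes "degree p \<le> d"
  shows "poly p x = (\<Sum>i\<le>d. coeff p i * x ^ i)"
proof -
  have "poly p x = (\<Sum>i\<le>degree p. coeff p i * x ^ i)" by (rule poly_altdef)
  also have "\<dots> = (\<Sum>i\<le>d. coeff p i * x ^ i)"
    by (rule sum.mono_neutral_left) (use assms in \<open>auto simp: coeff_eq_0\<close>)
  finally show ?thesis .
qed

lemma poly_symd: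
  fixes x :: "'b::field"
  assumes "degree r \<le> d" "x \<noteq> 0"
  shows "poly (map_poly of_int (symd d r)) x = x ^ d * poly (map_poly of_int r) (x + 1/x)"
proof -
  have "poly (map_poly of_int (symd d r)) x = (\<Sum>i\<le>d. of_int (coeff r i) * ((x*x+1)^i * x^(d-i)))"
    by (simp add: symd_def mp_sum mp_mult mp_power map_poly_smult poly_sum map_poly_pCons
        map_poly_monom poly_monom algebra_simps)
  also have "\<dots> = x ^ d * (\<Sum>i\<le>d. of_int (coeff r i) * (x + 1/x)^i)"
    unfolding sum_distrib_left
  proof (rule sum.cong)
    fix i assume "i \<in> {..d}"
    hence "x ^ d = x^i * x^(d-i)" by (simp add: power_add[symmetric])
    moreover have "x^i * (x + 1/x)^i = (x*x+1)^i"
      using assms(2) by (simp add: power_mult_distrib[symmetric] field_simps)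
    ultimately show "of_int (coeff r i) * ((x*x+1)^i * x^(d-i)) = x ^ d * (of_int (coeff r i) * (x + 1/x)^i)"
      by (metis mult.assoc mult.commute)
  qed simp
  also have "(\<Sum>i\<le>d. of_int (coeff r i) * (x + 1/x)^i) = poly (map_poly of_int r) (x + 1/x)"
    using assms(1) by (subst poly_ext_sum[of _ d]) (auto intro: order.trans[OF map_poly_degree_leq] simp: coeff_map_poly)
  finally show ?thesis .
qed

lemma eq_by_eval:
  fixes p q :: "int poly"
  assumes "\<And>x::real. x > 0 \<Longrightarrow> poly (map_poly of_int p) x = poly (map_poly of_int q) x"
  shows "p = q"
proof -
  define D where "D = map_poly (of_int :: int \<Rightarrow> real) (p - q)"
  have "{0<..} \<subseteq> {x. poly D x = 0}"
    using assms by (auto simp: D_def mp_diff)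
  moreover have "infinite {0::real<..}" by (simp add: infinite_Ioi)
  ultimately have "D = 0" using poly_roots_finite finite_subset by blast
  hence "p - q = 0" unfolding D_def by (subst (asm) map_poly_eq_0_iff) auto
  thus ?thesis by simp
qed



lemma cX_closed: "coeff ([:1,0,1::int:]^i) k = (if even k then int (i choose (k div 2)) else 0)"
proof (induction i arbitrary: k)
  case 0
  then show ?case by (cases k) auto
next
  case (Suc i)
  have e: "[:1,0,1::int:]^Suc i = [:1,0,1:]^i + pCons 0 (pCons 0 ([:1,0,1:]^i))"
    by (simp add: algebra_simps)
  show ?case
  proof (cases k)
    case 0 then show ?thesis by (simp add: e Suc)
  next
    case (Suc k1)
    show ?thesis
    proof (cases k1)
      case 0 then show ?thesis using Suc by (simp add: e Suc.IH)
    next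
      case (Suc m)
      have "even m \<Longrightarrow> Suc (Suc m) div 2 = Suc (m div 2)" by presburger
      then show ?thesis using \<open>k = Suc k1\<close> Suc by (auto simp: e Suc.IH)
    qed
  qed
qed

lemma ev_lt: "even (m::nat) \<Longrightarrow> 2*i < m \<Longrightarrow> i < m div 2"
  by (auto elim!: evenE)

lemma ev_ge: "even (m::nat) \<Longrightarrow> 2*i + 1 < m \<Longrightarrow> i < m div 2"
  by (auto elim!: evenE)

definition tt :: "nat \<Rightarrow> nat \<Rightarrow> nat \<Rightarrow> int" where
  "tt d i n = (if n < d - i then 0 else if even (n - (d-i)) then int (i choose ((n-(d-i)) div 2)) else 0)"

lemma coeff_symd: "coeff (symd d r) n = (\<Sum>i\<le>d. coeff r i * tt d i n)"
  unfolding symd_def coeff_sum tt_def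
  by (rule sum.cong) (auto simp: mult.commute[of _ "monom _ _"] coeff_monom_mult cX_closed)

lemma tt_big: "i \<le> d \<Longrightarrow> n > 2*d \<Longrightarrow> tt d i n = 0"
  using ev_lt[of "n-(d-i)" i] by (auto simp: tt_def binomial_eq_0)

lemma tt_top: "i \<le> d \<Longrightarrow> tt d i (2*d) = (if i = d then 1 else 0)"
proof (cases "i = d")
  case True
  then show ?thesis by (simp add: tt_def)
next
  case False
  assume "i \<le> d"
  then show ?thesis using False ev_lt[of "2*d-(d-i)" i] by (auto simp: tt_def binomial_eq_0)
qed

lemma tt_sub: "i \<le> d \<Longrightarrow> d \<ge> 1 \<Longrightarrow> tt d i (2*d-1) = (if i = d - 1 then 1 else 0)"
proof -
  assume a: "i \<le> d" "d \<ge> 1"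
  consider "i = d" | "i = d - 1" | "i = d - 2" "d \<ge> 2" | "i + 3 \<le> d" using a by linarith
  then show ?thesis
  proof cases
    case 1
    have "2*d-1-(d-i) = 2*(d-1)+1" using 1 a by simp
    then show ?thesis using 1 a by (simp add: tt_def)
  next
    case 2
    have "2*d-1-(d-i) = 2*(d-1)" using 2 a by simp
    then show ?thesis using 2 a by (simp add: tt_def)
  next
    case 3
    have "2*d-1-(d-i) = 2*(d-2)+1" "\<not> 2*d - 1 < d - i" "i \<noteq> d - 1" using 3 a by linarith+
    then show ?thesis by (simp add: tt_def)
  next
    case 4
    then show ?thesis using a ev_lt[of "2*d-1-(d-i)" i] by (auto simp: tt_def binomial_eq_0)
  qed
qed

lemma tt_pal: "i \<le> d \<Longrightarrow> n \<le> 2*d \<Longrightarrow> tt d i n = tt d i (2*d - n)"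
proof -
  assume a: "i \<le> d" "n \<le> 2*d"
  consider "n < d - i" | "2*d - n < d - i" | "\<not> n < d - i" "\<not> 2*d - n < d - i" by blast
  then show ?thesis
  proof cases
    case 1
    then show ?thesis using a ev_lt[of "2*d - n - (d-i)" i] by (auto simp: tt_def binomial_eq_0)
  next
    case 2
    then show ?thesis using a ev_lt[of "n - (d-i)" i] by (auto simp: tt_def binomial_eq_0)
  next
    case 3
    define m where "m = n - (d-i)"
    have m': "2*d - n - (d-i) = 2*i - m" "m \<le> 2*i" using 3 a unfolding m_def by linarith+
    show ?thesis
    proof (cases "even m")
      case True
      then obtain k where k: "m = 2*k" by (auto elim!: evenE)
      have "2*i - m = 2*(i-k)" "k \<le> i" using k m' by linarith+
      then show ?thesis using 3 k True unfolding tt_def m_def[symmetric] m'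
        by (simp add: binomial_symmetric[of k i])
    next
      case False
      then obtain k where k: "m = 2*k+1" by (auto elim!: oddE)
      have "2*i - m = 2*(i-k-1)+1" using k m' by linarith
      then show ?thesis using 3 k False unfolding tt_def m_def[symmetric] m'
        by simp
    qed
  qed
qed



lemma degree_symd: "degree (symd d r) \<le> 2*d"
proof (rule degree_le, intro allI impI)
  fix n assume n: "n > 2*d"
  show "coeff (symd d r) n = 0"
    unfolding coeff_symd by (rule sum.neutral) (use n tt_big in auto)
qed

lemma coeff_symd_top: "coeff (symd d r) (2*d) = coeff r d"
proof -
  have "coeff (symd d r) (2*d) = (\<Sum>i\<le>d. (if i = d then coeff r i else 0))"
    unfolding coeff_symd
  proof (rule sum.cong)
    fix i assume "i \<in> {..d}"
    then show "coeff r i * tt d i (2*d) = (if i = d then coeff r i else 0)"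
      using tt_top[of i d] by simp
  qed simp
  thus ?thesis by simp
qed

lemma coeff_symd_sub: "d \<ge> 1 \<Longrightarrow> coeff (symd d r) (2*d-1) = coeff r (d-1)"
proof -
  assume d: "d \<ge> 1"
  have "coeff (symd d r) (2*d-1) = (\<Sum>i\<le>d. (if i = d-1 then coeff r i else 0))"
    unfolding coeff_symd
  proof (rule sum.cong)
    fix i assume "i \<in> {..d}"
    then show "coeff r i * tt d i (2*d-1) = (if i = d-1 then coeff r i else 0)"
      using tt_sub[of i d] d by simp
  qed simp
  thus ?thesis using d by simp
qed

lemma symd_pal: "n \<le> 2*d \<Longrightarrow> coeff (symd d r) n = coeff (symd d r) (2*d-n)"
proof -
  assume n: "n \<le> 2*d"
  show ?thesis unfolding coeff_symd
  proof (rule sum.cong)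
    fix i assume "i \<in> {..d}"
    hence "tt d i n = tt d i (2*d-n)" using tt_pal[of i d n] n by simp
    thus "coeff r i * tt d i n = coeff r i * tt d i (2*d-n)" by (rule arg_cong)
  qed simp
qed
lemma symd_add: "symd d (r + s) = symd d r + symd d s"
  by (simp add: symd_def sum.distrib smult_add_left)

lemma symd_mult:
  assumes "degree r \<le> d1" "degree s \<le> d2"
  shows "symd (d1+d2) (r*s) = symd d1 r * symd d2 s"
proof (rule eq_by_eval)
  fix x :: real assume x: "x > 0"
  have "degree (r*s) \<le> d1 + d2" using assms degree_mult_le[of r s] by linarith
  thus "poly (map_poly of_int (symd (d1 + d2) (r * s))) x = poly (map_poly of_int (symd d1 r * symd d2 s)) x"
    using x assms by (simp add: poly_symd mp_mult power_add)
qed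

lemma symd_Suc:
  assumes "degree r \<le> d"
  shows "symd (Suc d) r = pCons 0 (symd d r)"
proof (rule eq_by_eval)
  fix x :: real assume x: "x > 0"
  show "poly (map_poly of_int (symd (Suc d) r)) x = poly (map_poly of_int (pCons 0 (symd d r))) x"
    using x assms by (simp add: poly_symd map_poly_pCons)
qed

lemma symd_monom: "symd d (monom c d) = smult c ([:1,0,1:]^d)"
proof -
  have "symd d (monom c d) = (\<Sum>i\<le>d. (if i = d then smult c ([:1,0,1:]^d) else 0))"
    unfolding symd_def by (rule sum.cong) (auto simp: coeff_monom)
  thus ?thesis by simp
qed


lemma symd_inj:
  assumes "degree r \<le> d" "degree s \<le> d" "symd d r = symd d s"
  shows "r = s"
proof -
  define D where "D = map_poly (of_int :: int \<Rightarrow> real) (r - s)"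
  have "(\<lambda>x. x + 1/x) ` {1<..} \<subseteq> {y. poly D y = 0}"
  proof
    fix y assume "y \<in> (\<lambda>x::real. x + 1/x) ` {1<..}"
    then obtain x where x: "x > 1" "y = x + 1/x" by auto
    have "x ^ d * poly (map_poly of_int r) y = x ^ d * poly (map_poly of_int s) y"
      using poly_symd[of r d x] poly_symd[of s d x] assms x by simp
    hence "poly (map_poly of_int r) y = poly (map_poly of_int s) y" using x by simp
    thus "y \<in> {y. poly D y = 0}" by (simp add: D_def mp_diff)
  qed
  moreover have "inj_on (\<lambda>x::real. x + 1/x) {1<..}"
  proof (rule inj_onI)
    fix a b :: real assume ab: "a \<in> {1<..}" "b \<in> {1<..}" "a + 1/a = b + 1/b"
    hence "(a - b) * (a*b - 1) = 0" by (simp add: field_simps)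
    moreover have "a*b > 1" using ab by (simp add: less_1_mult)
    ultimately show "a = b" by simp
  qed
  hence "infinite ((\<lambda>x::real. x + 1/x) ` {1<..})"
    using finite_imageD infinite_Ioi by blast
  ultimately have "D = 0" using poly_roots_finite finite_subset by blast
  hence "r - s = 0" unfolding D_def by (subst (asm) map_poly_eq_0_iff) auto
  thus ?thesis by simp
qed


lemma pal_symd:
  "degree p \<le> 2*d \<Longrightarrow> (\<forall>i\<le>2*d. coeff p i = coeff p (2*d-i)) \<Longrightarrow> \<exists>r. degree r \<le> d \<and> p = symd d r"
proof (induction d arbitrary: p)
  case 0
  hence "[:coeff p 0:] = p" by (intro degree_0_id) simp
  moreover have "symd 0 p = [:coeff p 0:]" by (simp add: symd_def)
  ultimately have "p = symd 0 p" by simp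
  moreover have "degree p \<le> 0" using 0 by simp
  ultimately show ?case by blast
next
  case (Suc d p)
  define c where "c = coeff p 0"
  define p1 where "p1 = p - smult c ([:1,0,1:]^Suc d)"
  have cp1: "coeff p1 i = coeff p i - c * (if even i then int (Suc d choose (i div 2)) else 0)" for i
    by (simp only: p1_def coeff_diff coeff_smult cX_closed)
  have "coeff p1 0 = 0" by (simp add: cp1 c_def)
  then obtain p2 where p12: "p1 = pCons 0 p2"
    by (cases p1) simp
  have pal1: "coeff p1 i = coeff p1 (2 * Suc d - i)" if "i \<le> 2 * Suc d" for i
  proof -
    have cp: "coeff p i = coeff p (2 * Suc d - i)" using Suc.prems(2) that by blast
    show ?thesis
    proof (cases "even i")
      case True
      then obtain k where k: "i = 2*k" by (auto elim!: evenE)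
      have j1: "k \<le> Suc d" using k that by arith
      have j2: "2 * Suc d - i = 2 * (Suc d - k)" using k by (simp add: diff_mult_distrib2)
      note j = j2 j1
      have b: "Suc d choose k = Suc d choose (Suc d - k)" by (rule binomial_symmetric) (use j in simp)
      show ?thesis unfolding cp1 using cp k j b by simp
    next
      case False
      then obtain k where k: "i = 2*k+1" by (auto elim!: oddE)
      have j: "2 * Suc d - i = 2 * (Suc d - k - 1) + 1" using k that by arith
      show ?thesis unfolding cp1 using cp k j by simp
    qed
  qed
  have top: "coeff p1 (2 * Suc d) = 0"
    using pal1[of 0] \<open>coeff p1 0 = 0\<close> by simp
  have deg1: "degree p1 \<le> 2 * Suc d"
  proof (rule degree_le, intro allI impI)
    fix i assume "i > 2 * Suc d"
    hence "coeff p i = 0" using Suc.prems(1) by (intro coeff_eq_0) linarith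
    moreover have "even i \<Longrightarrow> Suc d < i div 2" using \<open>i > 2 * Suc d\<close> ev_lt[of i "Suc d"] by blast
    ultimately show "coeff p1 i = 0" by (simp add: cp1 binomial_eq_0)
  qed
  have "degree p2 \<le> 2*d"
  proof (rule degree_le, intro allI impI)
    fix i assume i: "i > 2*d"
    show "coeff p2 i = 0"
    proof (cases "i = Suc (2*d)")
      case True
      then show ?thesis using top p12 by simp
    next
      case False
      hence "Suc i > 2 * Suc d" using i by simp
      hence "coeff p1 (Suc i) = 0" using deg1 by (intro coeff_eq_0) linarith
      thus ?thesis using p12 by simp
    qed
  qed
  moreover have "\<forall>i\<le>2*d. coeff p2 i = coeff p2 (2*d-i)"
  proof (intro allI impI)
    fix i assume i: "i \<le> 2*d"
    have "coeff p2 i = coeff p1 (Suc i)" using p12 by simp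
    also have "\<dots> = coeff p1 (2 * Suc d - Suc i)" using i pal1[of "Suc i"] by simp
    also have "2 * Suc d - Suc i = Suc (2*d - i)" using i by simp
    also have "coeff p1 \<dots> = coeff p2 (2*d - i)" using p12 by simp
    finally show "coeff p2 i = coeff p2 (2*d-i)" .
  qed
  ultimately obtain r2 where r2: "degree r2 \<le> d" "p2 = symd d r2" using Suc.IH by blast
  have "p = p1 + smult c ([:1,0,1:]^Suc d)" by (simp add: p1_def)
  also have "\<dots> = symd (Suc d) r2 + symd (Suc d) (monom c (Suc d))"
    using r2 p12 by (simp add: symd_Suc symd_monom)
  also have "\<dots> = symd (Suc d) (r2 + monom c (Suc d))" by (simp add: symd_add)
  finally have "p = symd (Suc d) (r2 + monom c (Suc d))" .
  moreover have "degree (r2 + monom c (Suc d)) \<le> Suc d"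
    by (rule degree_add_le) (use r2 degree_monom_le in auto)
  ultimately show ?case by blast
qed



lemma factor_root:
  fixes p :: "complex poly"
  assumes "degree p = Suc n" "lead_coeff p = 1"
  shows "\<exists>w p'. poly p w = 0 \<and> p = [:-w,1:] * p' \<and> degree p' = n \<and> lead_coeff p' = 1"
proof -
  have "\<not> constant (poly p)" using assms(1) by (subst constant_degree) simp
  then obtain w where w: "poly p w = 0" using fundamental_theorem_of_algebra by blast
  then obtain p' where p': "p = [:-w,1:] * p'" using poly_eq_0_iff_dvd by blast
  have "p' \<noteq> 0" using p' assms by auto
  hence "degree ([:-w,1:] * p') = degree [:-w,1:] + degree p'" by (intro degree_mult_eq) auto
  hence "degree p = 1 + degree p'" using p' by simp
  moreover have "lead_coeff ([:-w,1:] * p') = lead_coeff [:-w,1:] * lead_coeff p'" by (rule lead_coeff_mult)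
  hence "lead_coeff p' = 1" using p' assms(2) by simp
  ultimately show ?thesis using w p' assms(1) by auto
qed

lemma root_bound_aux:
  fixes p :: "complex poly"
  shows "degree p = Suc n \<Longrightarrow> lead_coeff p = 1 \<Longrightarrow> (\<forall>w. poly p w = 0 \<longrightarrow> norm w = 1)
     \<Longrightarrow> norm (coeff p n) \<le> Suc n"
proof (induction n arbitrary: p)
  case 0
  then obtain w p' where wp: "poly p w = 0" "p = [:-w,1:] * p'" "degree p' = 0" "lead_coeff p' = 1"
    using factor_root by blast
  have "coeff p' 0 = 1" using wp by simp
  hence "coeff p 0 = - w" using wp(2) by simp
  thus ?case using 0 wp(1) by simp
next
  case (Suc m)
  then obtain w p' where wp: "poly p w = 0" "p = [:-w,1:] * p'" "degree p' = Suc m" "lead_coeff p' = 1"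
    using factor_root by blast
  have "\<forall>v. poly p' v = 0 \<longrightarrow> norm v = 1" using Suc.prems(3) wp(2) by auto
  hence ih: "norm (coeff p' m) \<le> Suc m" using Suc.IH wp by blast
  have "coeff p (Suc m) = - w + coeff p' m" using wp(2-4) by simp
  hence "norm (coeff p (Suc m)) \<le> norm w + norm (coeff p' m)"
    by (metis norm_minus_cancel norm_triangle_ineq)
  thus ?case using ih Suc.prems(3) wp(1) by simp
qed

lemma root_bound:
  fixes p :: "complex poly"
  assumes "lead_coeff p = 1" "degree p \<ge> 1" "\<forall>w. poly p w = 0 \<longrightarrow> norm w = 1"
  shows "norm (coeff p (degree p - 1)) \<le> degree p"
proof -
  obtain n where "degree p = Suc n" using assms(2) by (cases "degree p") auto
  thus ?thesis using root_bound_aux[of p n] assms by simp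
qed

lemma coeff_pcompose_monom_dvd:
  "coeff (pcompose r (monom (1::int) k)) n \<noteq> 0 \<Longrightarrow> k dvd n"
proof (induction r arbitrary: n)
  case 0
  then show ?case by simp
next
  case (pCons a r)
  show ?case
  proof (cases "n < k")
    case True
    hence "n = 0" using pCons.prems by (cases n) (auto simp: pcompose_pCons coeff_monom_mult)
    then show ?thesis by simp
  next
    case False
    hence "n \<noteq> 0 \<Longrightarrow> coeff (pcompose r (monom 1 k)) (n - k) \<noteq> 0"
      using pCons.prems by (cases n) (auto simp: pcompose_pCons coeff_monom_mult)
    then show ?thesis using pCons.IH False
      by (metis dvd_0_right dvd_add_right_iff le_add_diff_inverse not_less dvd_refl)
  qed
qed

lemma cyc_roots:
  assumes "cyclotomic S"
  shows "\<forall>w::complex. poly (map_poly of_int S) w = 0 \<longrightarrow> norm w = 1"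
proof -
  obtain n z where nz: "primitive_root_of_unity n z" "is_min_poly_rat (map_poly of_int S) z"
    using assms unfolding cyclotomic_def by blast
  define m :: "rat poly" where "m = map_poly of_int S"
  define P :: "rat poly" where "P = monom 1 n - 1"
  have hom: "\<And>a b. of_rat (a+b) = (of_rat a + of_rat b :: complex)"
            "\<And>a b. of_rat (a*b) = (of_rat a * of_rat b :: complex)"
            "\<And>a b. of_rat (a-b) = (of_rat a - of_rat b :: complex)"
    by (simp_all add: of_rat_add of_rat_mult of_rat_diff)
  have evP: "poly (map_poly of_rat P) x = x ^ n - 1" for x :: complex
    by (simp add: P_def mp_diff hom map_poly_monom poly_monom)
  have m1: "lead_coeff m = 1" "poly (map_poly of_rat m) z = 0"
    and mmin: "\<And>r. r \<noteq> 0 \<Longrightarrow> poly (map_poly of_rat r) z = 0 \<Longrightarrow> degree m \<le> degree r"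
    using nz(2) unfolding is_min_poly_rat_def m_def by auto
  have "m \<noteq> 0" using m1 by auto
  define r where "r = P mod m"
  have Pe: "P = P div m * m + r" unfolding r_def by simp
  have "poly (map_poly of_rat P) z = 0" using nz(1) evP unfolding primitive_root_of_unity_def by simp
  hence "poly (map_poly of_rat (P div m)) z * poly (map_poly of_rat m) z + poly (map_poly of_rat r) z = 0"
    by (subst (asm) Pe) (simp add: mp_add mp_mult hom)
  hence rz: "poly (map_poly of_rat r) z = 0" using m1 by simp
  have "r = 0"
  proof (rule ccontr)
    assume "r \<noteq> 0"
    hence "degree r < degree m" using degree_mod_less[OF \<open>m \<noteq> 0\<close>, of P] unfolding r_def by auto
    with mmin[OF \<open>r \<noteq> 0\<close> rz] show False by simp
  qed
  hence PP: "P = P div m * m" using Pe by simp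
  have cm: "map_poly (of_int :: int \<Rightarrow> complex) S = map_poly of_rat m"
    unfolding m_def by (subst map_poly_map_poly) (simp_all add: o_def)
  show ?thesis
  proof (intro allI impI)
    fix w :: complex assume "poly (map_poly of_int S) w = 0"
    hence "poly (map_poly of_rat m) w = 0" using cm by simp
    hence "poly (map_poly of_rat P) w = 0"
      by (subst PP) (simp add: mp_mult hom)
    hence "w ^ n = 1" using evP by simp
    thus "norm w = 1" using power_eq_1_iff[of w n] nz(1) unfolding primitive_root_of_unity_def by auto
  qed
qed



theorem proposition3p4:
  fixes q :: "int poly"
  assumes "lead_coeff q = 1"
    and "irreducible q"
    and "\<bar>coeff q (degree q - 1)\<bar> > 2 * int (degree q)"
  shows "symplectically_irreducible (sym_poly q) \<and> \<not> cyclotomic (sym_poly q) \<and>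
         (\<forall>k>1. \<not> poly_in_power (sym_poly q) k)"
proof -
  define g where "g = degree q"
  define S where "S = sym_poly q"
  have S: "S = symd g q" by (simp add: S_def sym_poly_symd g_def)
  have g1: "g \<ge> 1"
  proof (rule ccontr)
    assume "\<not> g \<ge> 1"
    hence "degree q = 0" by (simp add: g_def)
    have c0: "coeff q 0 = 1" using assms(1) \<open>degree q = 0\<close> by simp
    have "q = [:coeff q 0:]" by (rule sym[OF degree_0_id[OF \<open>degree q = 0\<close>]])
    also have "\<dots> = 1" by (simp only: c0 pCons_one)
    finally have "q = 1" .
    thus False using assms(2) by simp
  qed
  define a where "a = coeff q (g - 1)"
  have a: "\<bar>a\<bar> > 2 * int g" using assms(3) by (simp add: a_def g_def)
  have cq: "coeff q g = 1" using assms(1) by (simp add: g_def)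
  have topS: "coeff S (2*g) = 1" using cq by (simp add: S coeff_symd_top)
  have degS: "degree S = 2*g"
    using degree_symd[of g q] le_degree[of S "2*g"] topS S by simp
  have leadS: "lead_coeff S = 1" using degS topS by simp
  have subS: "coeff S (2*g-1) = a" unfolding S a_def using coeff_symd_sub[OF g1] .
  have "\<forall>i\<le>degree S. coeff S i = coeff S (degree S - i)"
  proof (intro allI impI)
    fix i assume "i \<le> degree S"
    hence "i \<le> 2*g" using degS by simp
    from symd_pal[OF this, of q] show "coeff S i = coeff S (degree S - i)" unfolding degS unfolding S .
  qed
  note pal = this
  have symp: "symplectic_poly S"
    unfolding symplectic_poly_def
  proof (intro conjI)
    show "even (degree S)" using degS by simp
    show "lead_coeff S = 1" by (rule leadS)
    show "\<forall>i\<le>degree S. coeff S i = coeff S (degree S - i)" by (rule pal)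
  qed
  have irr: "\<not> (\<exists>A B. symplectic_poly A \<and> symplectic_poly B \<and> degree A > 0 \<and> degree B > 0 \<and> S = A * B)"
  proof
    assume "\<exists>A B. symplectic_poly A \<and> symplectic_poly B \<and> degree A > 0 \<and> degree B > 0 \<and> S = A * B"
    then obtain A B where AB: "symplectic_poly A" "symplectic_poly B" "degree A > 0" "degree B > 0" "S = A * B"
      by blast
    have dec: "\<exists>d r. degree A' = 2*d \<and> d > 0 \<and> degree r = d \<and> A' = symd d r" 
      if sA: "symplectic_poly A'" and pA: "degree A' > 0" for A'
    proof -
      have ev: "even (degree A')" and l1: "lead_coeff A' = 1"
        and pl: "\<forall>i\<le>degree A'. coeff A' i = coeff A' (degree A' - i)"
        using sA unfolding symplectic_poly_def by blast+
      obtain d where d: "degree A' = 2*d" using ev by (auto elim!: evenE)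
      have "\<forall>i\<le>2*d. coeff A' i = coeff A' (2*d-i)" using pl unfolding d .
      note pd = this
      have "degree A' \<le> 2*d" using d by simp
      from pal_symd[OF this pd] obtain r where r: "degree r \<le> d" "A' = symd d r" by blast
      have "coeff r d = coeff A' (2*d)" using r by (simp add: coeff_symd_top)
      also have "\<dots> = 1" using l1 d by simp
      finally have "d \<le> degree r" by (intro le_degree) simp
      thus ?thesis using r d pA by (intro exI[of _ d] exI[of _ r]) auto
    qed
    obtain d1 r1 where 1: "degree A = 2*d1" "d1 > 0" "degree r1 = d1" "A = symd d1 r1"
      using dec[OF AB(1,3)] by blast
    obtain d2 r2 where 2: "degree B = 2*d2" "d2 > 0" "degree r2 = d2" "B = symd d2 r2"
      using dec[OF AB(2,4)] by blast
    have "A \<noteq> 0" "B \<noteq> 0" using AB(3,4) by auto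
    hence "degree S = degree A + degree B" using AB(5) by (simp add: degree_mult_eq)
    hence gd: "g = d1 + d2" using degS 1 2 by simp
    have "symd g (r1 * r2) = S" using symd_mult[of r1 d1 r2 d2] 1 2 gd AB(5) by simp
    moreover have "degree (r1 * r2) \<le> g" using degree_mult_le[of r1 r2] 1 2 gd by simp
    ultimately have "r1 * r2 = q" using symd_inj[of "r1*r2" g q] S g_def by simp
    hence "r1 dvd 1 \<or> r2 dvd 1" using assms(2) irreducibleD by metis
    thus False using 1 2 by (auto simp: is_unit_poly_iff)
  qed
  have cyc: "\<not> cyclotomic S"
  proof
    assume "cyclotomic S"
    define CS where "CS = map_poly (of_int :: int \<Rightarrow> complex) S"
    have rts: "\<forall>w. poly CS w = 0 \<longrightarrow> norm w = 1" using cyc_roots[OF \<open>cyclotomic S\<close>] by (simp add: CS_def)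
    have dCS: "degree CS = 2*g" unfolding CS_def by (subst degree_map_poly) (simp_all add: degS)
    have lCS: "lead_coeff CS = 1" using dCS leadS degS by (simp add: CS_def coeff_map_poly)
    have sCS: "coeff CS (2*g-1) = of_int a" using subS by (simp add: CS_def coeff_map_poly)
    have "norm (coeff CS (degree CS - 1)) \<le> degree CS" using root_bound[OF lCS _ rts] dCS g1 by simp
    hence "norm (of_int a :: complex) \<le> 2*g" using dCS sCS by simp
    hence "\<bar>a\<bar> \<le> 2 * int g" by (simp add: norm_of_int)
    thus False using a by simp
  qed
  have pw: "\<forall>k>1. \<not> poly_in_power S k"
  proof (intro allI impI notI)
    fix k :: nat assume k: "k > 1" "poly_in_power S k"
    then obtain r where r: "S = pcompose r (monom 1 k)" unfolding poly_in_power_def by blast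
    have "a \<noteq> 0" using a by auto
    hence "k dvd 2*g - 1" using coeff_pcompose_monom_dvd[of r k "2*g-1"] subS r by simp
    moreover have "k dvd 2*g" using coeff_pcompose_monom_dvd[of r k "2*g"] topS r by simp
    ultimately have "k dvd (2*g - (2*g - 1))" by (simp add: dvd_diff_nat)
    moreover have "2*g - (2*g - 1) = 1" using g1 by simp
    ultimately show False using k by simp
  qed
  show ?thesis
    unfolding symplectically_irreducible_def S_def[symmetric]
    using symp irr cyc pw degS g1 by simp
qed


end
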